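(* Let $T>0$, $N\ge1$, $p>1$, and let $F:[0,T]\times\mathbb{R}^N\to\mathbb{R}$ and $\delta>0$ be such that for a.e. $t$, $x\mapsto F(t,x)$ is continuously differentiable on $\{|x|\le\delta\}$. Assume: (H1) there exist constants $q_1>p^2$, $q_2\in(p^2,q_1)$, $M_1>0$, $M_2>0$ with $M_1|x|^{q_1}\le F(t,x)\le M_2|x|^{q_2}$ for all $|x|\le\delta$ and a.e. $t\in[0,T]$; (H2) there is $\beta>p^2$ with $0\le\beta F(t,x)\le(\nabla F(t,x),x)$ for all $|x|\le\delta$ and a.e. $t\in[0,T]$. Let $m\in C^1(\mathbb{R},[0,1])$ be even with $sm'(s)\le0$ for all $s$, $m(s)=1$ for $|s|\le\delta/2$ and $m(s)=0$ for $|s|\ge\delta$, and define $\bar F(t,x)=m(|x|)F(t,x)+(1-m(|x|))M_2|x|^{q_2}$. Let $\theta=\min\{q_2,\beta\}$. Then, for a.e. $t\in[0,T]$: (i) $0\le\bar F(t,x)\le M_2|x|^{q_2}$ for all $x\in\mathbb{R}^N$; (ii) $0<\theta\bar F(t,x)\le(\nabla\bar F(t,x),x)$ for all $x\in\mathbb{R}^N\setminus\{0\}$.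
   Context: $\nabla$ denotes the gradient in $x\in\mathbb{R}^N$ and $(\cdot,\cdot)$ the Euclidean inner product. *)

theory Defs
  imports "HOL-Analysis.Analysis"
begin

definition Fbar :: "(real \<Rightarrow> real) \<Rightarrow> real \<Rightarrow> real \<Rightarrow> (real \<Rightarrow> 'a::euclidean_space \<Rightarrow> real)
    \<Rightarrow> real \<Rightarrow> 'a \<Rightarrow> real" where
  "Fbar m M2 q2 F t x = m (norm x) * F t x + (1 - m (norm x)) * M2 * norm x powr q2"

end

theory Submission
  imports Defs
begin


lemma has_derivative_within_Un2:
  assumes "(f has_derivative f') (at x within S)" "(f has_derivative f') (at x within T)"
  shows "(f has_derivative f') (at x within (S \<union> T))"
  using assms unfolding has_derivative_within by (auto intro: Lim_Un)

lemma comp_norm_deriv: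
  fixes x :: "'a::euclidean_space"
  assumes "(m has_real_derivative d) (at (norm x))" "x \<noteq> 0"
  shows "((\<lambda>y. m (norm y)) has_derivative (\<lambda>h. d * (sgn x \<bullet> h))) (at x)"
proof -
  have n: "(norm has_derivative (\<lambda>h. sgn x \<bullet> h)) (at x)"
      using has_derivative_norm[OF assms(2)] by (simp add: inner_commute)
  have mm: "(m has_derivative (\<lambda>u. d * u)) (at (norm x))"
      using assms(1) by (simp add: has_field_derivative_def)
  from has_derivative_compose[OF n mm] show ?thesis by (simp add: o_def)
qed

lemma pow_deriv:
  fixes x :: "'a::euclidean_space"
  assumes "x \<noteq> 0"
  shows "((\<lambda>y. norm y powr q) has_derivative (\<lambda>h. q * norm x powr (q - 1) * (sgn x \<bullet> h))) (at x)"
proof -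
  have d: "((\<lambda>s. s powr q) has_real_derivative q * norm x powr (q - 1)) (at (norm x))"
    using assms by (auto intro!: derivative_eq_intros)
  show ?thesis using comp_norm_deriv[OF d assms] .
qed

lemma core:
  fixes F :: "real \<Rightarrow> 'a::euclidean_space \<Rightarrow> real" and g :: "'a \<Rightarrow> 'a"
    and m m' :: "real \<Rightarrow> real"
  assumes \<delta>: "\<delta> > 0" and M: "M1 > 0" "M2 > 0" and q2: "q2 > 0" and \<beta>: "\<beta> > 0"
    and df: "\<forall>x\<in>cball 0 \<delta>. (F t has_derivative (\<lambda>h. inner (g x) h)) (at x within cball 0 \<delta>)"
    and h1: "\<forall>x. norm x \<le> \<delta> \<longrightarrow> M1 * norm x powr q1 \<le> F t x \<and> F t x \<le> M2 * norm x powr q2"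
    and h2: "\<forall>x. norm x \<le> \<delta> \<longrightarrow> 0 \<le> \<beta> * F t x \<and> \<beta> * F t x \<le> inner (g x) x"
    and m_deriv: "\<And>s. (m has_real_derivative m' s) (at s)"
    and m_range: "\<And>s. 0 \<le> m s \<and> m s \<le> 1"
    and m_mono: "\<And>s. s * m' s \<le> 0"
    and m_zero: "\<And>s. \<bar>s\<bar> \<ge> \<delta> \<Longrightarrow> m s = 0"
  shows "(\<forall>x. 0 \<le> Fbar m M2 q2 F t x \<and> Fbar m M2 q2 F t x \<le> M2 * norm x powr q2)
         \<and> (\<forall>x. x \<noteq> 0 \<longrightarrow> (\<exists>D. (Fbar m M2 q2 F t has_derivative (\<lambda>h. inner D h)) (at x)
                 \<and> 0 < min q2 \<beta> * Fbar m M2 q2 F t x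
                 \<and> min q2 \<beta> * Fbar m M2 q2 F t x \<le> inner D x))"
proof -
  have m'0: "m' s = 0" if "\<bar>s\<bar> \<ge> \<delta>" for s
    by (rule DERIV_local_min[OF m_deriv, of 1]) (use m_zero[OF that] m_range in auto)
  have Fnn: "0 \<le> F t x" if "norm x \<le> \<delta>" for x
  proof -
    have "0 \<le> M1 * norm x powr q1" using M by simp
    then show ?thesis using h1 that by force
  qed
  have part1: "0 \<le> Fbar m M2 q2 F t x \<and> Fbar m M2 q2 F t x \<le> M2 * norm x powr q2" for x
  proof (cases "norm x \<le> \<delta>")
    case True
    define a where "a = F t x"
    define A where "A = M2 * norm x powr q2"
    define \<mu> where "\<mu> = m (norm x)"
    have "0 \<le> a" "a \<le> A" "0 \<le> \<mu>" "\<mu> \<le> 1" "0 \<le> A"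
      using Fnn[OF True] h1 True m_range M unfolding a_def A_def \<mu>_def by auto
    then have "0 \<le> \<mu> * a + (1 - \<mu>) * A \<and> \<mu> * a + (1 - \<mu>) * A \<le> A"
    proof -
      assume h: "0 \<le> a" "a \<le> A" "0 \<le> \<mu>" "\<mu> \<le> 1" "0 \<le> A"
      have "\<mu> * a \<le> \<mu> * A" using h by (simp add: mult_left_mono)
      moreover have "0 \<le> \<mu> * a" "0 \<le> (1 - \<mu>) * A" using h by simp_all
      moreover have "\<mu> * A + (1 - \<mu>) * A = A" by (simp add: algebra_simps)
      ultimately show ?thesis by linarith
    qed
    then show ?thesis unfolding Fbar_def a_def A_def \<mu>_def by (simp add: mult.assoc)
  next
    case False
    then show ?thesis using m_zero[of "norm x"] M by (simp add: Fbar_def)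
  qed
  have part2: "\<exists>D. (Fbar m M2 q2 F t has_derivative (\<lambda>h. inner D h)) (at x)
                 \<and> 0 < min q2 \<beta> * Fbar m M2 q2 F t x
                 \<and> min q2 \<beta> * Fbar m M2 q2 F t x \<le> inner D x" if x0: "x \<noteq> 0" for x
  proof -
    define s where "s = norm x"
    have s0: "s > 0" using x0 s_def by auto
    define D1 where "D1 = (if s \<le> \<delta> then m s *\<^sub>R g x + (m' s * F t x) *\<^sub>R sgn x else 0)"
    define D2 where "D2 = ((1 - m s) * M2 * (q2 * s powr (q2 - 1)) - m' s * M2 * s powr q2) *\<^sub>R sgn x"
    define G1 where "G1 = (\<lambda>y::'a. m (norm y) * F t y)"
    define G2 where "G2 = (\<lambda>y::'a. (1 - m (norm y)) * M2 * norm y powr q2)"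
    have Feq: "Fbar m M2 q2 F t = (\<lambda>y. G1 y + G2 y)"
      unfolding Fbar_def G1_def G2_def by auto
    have dm: "((\<lambda>y. m (norm y)) has_derivative (\<lambda>h. m' s * (sgn x \<bullet> h))) (at x)"
      using comp_norm_deriv[OF m_deriv x0] s_def by simp
    have dG2: "(G2 has_derivative (\<lambda>h. inner D2 h)) (at x)"
    proof -
      have a: "((\<lambda>y. (1 - m (norm y)) * M2) has_derivative (\<lambda>h. (- (m' s * (sgn x \<bullet> h))) * M2)) (at x)"
      proof -
        have c: "((\<lambda>y. 1 - m (norm y)) has_derivative (\<lambda>h. 0 - m' s * (sgn x \<bullet> h))) (at x)"
          by (rule has_derivative_diff[OF has_derivative_const dm])
        show ?thesis using has_derivative_mult[OF c has_derivative_const[of M2]] by simp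
      qed
      have "(G2 has_derivative (\<lambda>h. (1 - m (norm x)) * M2 * (q2 * norm x powr (q2 - 1) * (sgn x \<bullet> h))
              + (- (m' s * (sgn x \<bullet> h))) * M2 * norm x powr q2)) (at x)"
        unfolding G2_def by (rule has_derivative_mult[OF a pow_deriv[OF x0]])
      then show ?thesis
        by (rule has_derivative_eq_rhs) (auto simp: D2_def s_def algebra_simps inner_scaleR_left)
    qed
    have dG1: "(G1 has_derivative (\<lambda>h. inner D1 h)) (at x)"
    proof (cases "s \<le> \<delta>")
      case True
      have xin: "x \<in> cball 0 \<delta>" using True s_def by auto
      have w: "(G1 has_derivative (\<lambda>h. m s * (g x \<bullet> h) + m' s * (sgn x \<bullet> h) * F t x)) (at x within cball 0 \<delta>)"
        unfolding G1_def using has_derivative_mult[OF has_derivative_at_withinI[OF dm] df[rule_format, OF xin]]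
        by (simp add: s_def)
      have w': "(G1 has_derivative (\<lambda>h. inner D1 h)) (at x within cball 0 \<delta>)"
        using w by (rule has_derivative_eq_rhs) (auto simp: D1_def True algebra_simps inner_scaleR_left)
      show ?thesis
      proof (cases "s < \<delta>")
        case True
        have "x \<in> interior (cball 0 \<delta>)" using True s_def by auto
        then show ?thesis using w' at_within_interior by metis
      next
        case False
        then have sd: "s = \<delta>" using \<open>s \<le> \<delta>\<close> by auto
        have D10: "D1 = 0" using sd m_zero[of s] m'0[of s] s0 by (simp add: D1_def)
        have o: "(G1 has_derivative (\<lambda>h. inner D1 h)) (at x within {y. \<delta> \<le> norm y})"
        proof (rule has_derivative_transform_within[of "\<lambda>y. 0" _ _ _ 1])
          show "((\<lambda>y. 0) has_derivative (\<lambda>h. inner D1 h)) (at x within {y. \<delta> \<le> norm y})"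
            using D10 by simp
          show "x \<in> {y. \<delta> \<le> norm y}" using sd s_def by simp
          show "\<And>x'. x' \<in> {y. \<delta> \<le> norm y} \<Longrightarrow> dist x' x < 1 \<Longrightarrow> 0 = G1 x'"
            using m_zero by (simp add: G1_def)
        qed (simp)
        have U: "cball 0 \<delta> \<union> {y. \<delta> \<le> norm y} = UNIV" by auto
        show ?thesis using has_derivative_within_Un2[OF w' o] unfolding U .
      qed
    next
      case False
      have D10: "D1 = 0" using False by (simp add: D1_def)
      show ?thesis
      proof (rule has_derivative_transform_within_open[of "\<lambda>y. 0" _ _ _ "- cball 0 \<delta>"])
        show "((\<lambda>y. 0) has_derivative (\<lambda>h. inner D1 h)) (at x)" using D10 by simp
        show "x \<in> - cball 0 \<delta>" using False s_def by simp
        show "\<And>y. y \<in> - cball 0 \<delta> \<Longrightarrow> 0 = G1 y" using m_zero by (simp add: G1_def)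
      qed auto
    qed
    have dF: "(Fbar m M2 q2 F t has_derivative (\<lambda>h. inner (D1 + D2) h)) (at x)"
      unfolding Feq using has_derivative_add[OF dG1 dG2] by (simp add: inner_add_left)
    have sgnx: "sgn x \<bullet> x = s" using s_def x0
      by (simp add: sgn_div_norm inner_scaleR_left power2_norm_eq_inner[symmetric] power2_eq_square)
    have spow: "s powr (q2 - 1) * s = s powr q2" using s0 by (simp add: powr_diff)
    define \<theta> where "\<theta> = min q2 \<beta>"
    have th: "0 < \<theta>" "\<theta> \<le> q2" "\<theta> \<le> \<beta>" using q2 \<beta> by (auto simp: \<theta>_def)
    have P: "0 < s powr q2" using s0 by simp
    have ineq: "0 < Fbar m M2 q2 F t x \<and> \<theta> * Fbar m M2 q2 F t x \<le> inner (D1 + D2) x"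
    proof (cases "s \<le> \<delta>")
      case True
      define a where "a = F t x"
      define A where "A = M2 * s powr q2"
      define \<mu> where "\<mu> = m s"
      define \<nu> where "\<nu> = m' s * s"
      define b where "b = g x \<bullet> x"
      have "M1 * s powr q1 \<le> a" "a \<le> A" using h1 True s_def a_def A_def by auto
      moreover have "0 < M1 * s powr q1" using M s0 by simp
      ultimately have a0: "0 < a" by linarith
      have A0: "0 < A" using M P A_def by simp
      have mu: "0 \<le> \<mu>" "\<mu> \<le> 1" using m_range \<mu>_def by auto
      have nu: "\<nu> \<le> 0" using m_mono[of s] \<nu>_def by (simp add: mult.commute)
      have bb: "\<beta> * a \<le> b" using h2 True s_def a_def b_def by auto
      have FB: "Fbar m M2 q2 F t x = \<mu> * a + (1 - \<mu>) * A"
        unfolding Fbar_def \<mu>_def a_def A_def s_def by (simp add: mult.assoc)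
      have ID: "inner (D1 + D2) x = \<mu> * b + \<nu> * a + (1 - \<mu>) * q2 * A - \<nu> * A"
        using True sgnx spow
        by (simp add: D1_def D2_def inner_add_left inner_scaleR_left \<mu>_def \<nu>_def a_def A_def b_def algebra_simps)
      have pos: "0 < \<mu> * a + (1 - \<mu>) * A"
      proof (cases "\<mu> = 0")
        case True then show ?thesis using A0 by simp
      next
        case False
        then have "0 < \<mu> * a" using mu a0 by simp
        moreover have "0 \<le> (1 - \<mu>) * A" using mu A0 by simp
        ultimately show ?thesis by linarith
      qed
      have e1: "\<theta> * (\<mu> * a) \<le> \<mu> * b"
      proof -
        have "\<theta> * a \<le> \<beta> * a" using th a0 by (simp add: mult_right_mono)
        then have "\<theta> * a \<le> b" using bb by linarith
        then show ?thesis using mu by (metis mult.left_commute mult_left_mono)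
      qed
      have e2: "\<theta> * ((1 - \<mu>) * A) \<le> (1 - \<mu>) * q2 * A"
      proof -
        have "0 \<le> (1 - \<mu>) * A" using mu A0 by simp
        then show ?thesis using th mult_right_mono[of \<theta> q2 "(1 - \<mu>) * A"] by (simp add: algebra_simps)
      qed
      have e3: "0 \<le> \<nu> * a - \<nu> * A"
      proof -
        have "\<nu> * A \<le> \<nu> * a" using nu \<open>a \<le> A\<close> by (simp add: mult_left_mono_neg)
        then show ?thesis by simp
      qed
      show ?thesis unfolding FB ID using pos e1 e2 e3 by (simp add: algebra_simps)
    next
      case False
      have mz: "m s = 0" "m' s = 0" using False m_zero m'0 s0 by auto
      have FB: "Fbar m M2 q2 F t x = M2 * s powr q2"
        unfolding Fbar_def using mz s_def by simp
      have ID: "inner (D1 + D2) x = q2 * (M2 * s powr q2)"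
        using False sgnx spow mz
        by (simp add: D1_def D2_def inner_add_left inner_scaleR_left algebra_simps)
      show ?thesis unfolding FB ID using M P th by (simp add: mult_right_mono)
    qed
    show ?thesis
      using dF ineq th unfolding \<theta>_def by (intro exI[of _ "D1 + D2"]) auto
  qed
  show ?thesis using part1 part2 by blast
qed



theorem lemma3p1:
  fixes F :: "real \<Rightarrow> 'a::euclidean_space \<Rightarrow> real"
    and gradF :: "real \<Rightarrow> 'a \<Rightarrow> 'a"
    and m m' :: "real \<Rightarrow> real"
    and T p \<delta> q1 q2 M1 M2 \<beta> :: real
  assumes T: "T > 0" and p: "p > 1" and \<delta>: "\<delta> > 0"
    and C1: "AE t in lebesgue. t \<in> {0..T} \<longrightarrow>
              (\<forall>x\<in>cball 0 \<delta>. (F t has_derivative (\<lambda>h. inner (gradF t x) h)) (at x within cball 0 \<delta>))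
              \<and> continuous_on (cball 0 \<delta>) (gradF t)"
    and q: "q1 > p\<^sup>2" "p\<^sup>2 < q2" "q2 < q1" and M: "M1 > 0" "M2 > 0"
    and H1: "AE t in lebesgue. t \<in> {0..T} \<longrightarrow>
              (\<forall>x. norm x \<le> \<delta> \<longrightarrow> M1 * norm x powr q1 \<le> F t x \<and> F t x \<le> M2 * norm x powr q2)"
    and \<beta>: "\<beta> > p\<^sup>2"
    and H2: "AE t in lebesgue. t \<in> {0..T} \<longrightarrow>
              (\<forall>x. norm x \<le> \<delta> \<longrightarrow> 0 \<le> \<beta> * F t x \<and> \<beta> * F t x \<le> inner (gradF t x) x)"
    and m_deriv: "\<And>s. (m has_real_derivative m' s) (at s)"
    and m'_cont: "continuous_on UNIV m'"
    and m_range: "\<And>s. 0 \<le> m s \<and> m s \<le> 1"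
    and m_even: "\<And>s. m (- s) = m s"
    and m_mono: "\<And>s. s * m' s \<le> 0"
    and m_one: "\<And>s. \<bar>s\<bar> \<le> \<delta> / 2 \<Longrightarrow> m s = 1"
    and m_zero: "\<And>s. \<bar>s\<bar> \<ge> \<delta> \<Longrightarrow> m s = 0"
  shows "AE t in lebesgue. t \<in> {0..T} \<longrightarrow>
           (\<forall>x. 0 \<le> Fbar m M2 q2 F t x \<and> Fbar m M2 q2 F t x \<le> M2 * norm x powr q2)
         \<and> (\<forall>x. x \<noteq> 0 \<longrightarrow> (\<exists>D. (Fbar m M2 q2 F t has_derivative (\<lambda>h. inner D h)) (at x)
                 \<and> 0 < min q2 \<beta> * Fbar m M2 q2 F t x
                 \<and> min q2 \<beta> * Fbar m M2 q2 F t x \<le> inner D x))"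
proof -
  have pp: "p\<^sup>2 > 0" using p by simp
  have q2: "q2 > 0" using q pp by linarith
  have b: "\<beta> > 0" using \<beta> pp by linarith
  show ?thesis
    using C1 H1 H2
  proof eventually_elim
    case (elim t)
    show ?case
    proof
      assume tT: "t \<in> {0..T}"
      have c1: "\<forall>x\<in>cball 0 \<delta>. (F t has_derivative (\<lambda>h. inner (gradF t x) h)) (at x within cball 0 \<delta>)"
        using elim(1) tT by blast
      have h1: "\<forall>x. norm x \<le> \<delta> \<longrightarrow> M1 * norm x powr q1 \<le> F t x \<and> F t x \<le> M2 * norm x powr q2"
        using elim(2) tT by blast
      have h2: "\<forall>x. norm x \<le> \<delta> \<longrightarrow> 0 \<le> \<beta> * F t x \<and> \<beta> * F t x \<le> inner (gradF t x) x"
        using elim(3) tT by blast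
      show "(\<forall>x. 0 \<le> Fbar m M2 q2 F t x \<and> Fbar m M2 q2 F t x \<le> M2 * norm x powr q2)
         \<and> (\<forall>x. x \<noteq> 0 \<longrightarrow> (\<exists>D. (Fbar m M2 q2 F t has_derivative (\<lambda>h. inner D h)) (at x)
                 \<and> 0 < min q2 \<beta> * Fbar m M2 q2 F t x
                 \<and> min q2 \<beta> * Fbar m M2 q2 F t x \<le> inner D x))"
        by (rule core[where F=F and t=t and g="gradF t", OF \<delta> M q2 b c1 h1 h2 m_deriv m_range m_mono m_zero])
    qed
  qed
qed

end
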